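(* Let $G$ be the graph defined in the context. For every edge $e\in E(G)$, the graph obtained from $G$ by deleting $e$ contains an induced subgraph isomorphic to $P_6$.
   Context: $P_n$ denotes the path on $n$ vertices. Let $\mathbb{F}=\mathbb{F}_2[\alpha]/(\alpha^4+\alpha+1)$ be the field with 16 elements. Let $S=\{x^3: x\in\mathbb{F}^\times\}=\{1,\alpha^3,\alpha^2+\alpha^3,\alpha+\alpha^3,1+\alpha+\alpha^2+\alpha^3\}$ be the set of nonzero cubes. Let $G$ be the graph with vertex set $\mathbb{F}$ in which distinct $x,y$ are adjacent if and only if $x-y\in S$. *)

theory Defs
  imports "HOL-Computational_Algebra.Polynomial" "HOL-Library.Z2"
begin

text \<open>The field F = F_2[alpha]/(alpha^4+alpha+1), realised by canonical representatives:
  polynomials over F_2 (type bit) of degree < 4, with multiplication modulo the modulus.\<close>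

definition gf_mod :: "bit poly" where
  "gf_mod = [:1, 1, 0, 0, 1:]"

definition GF16 :: "bit poly set" where
  "GF16 = {p. degree p < 4}"

definition gf_mult :: "bit poly \<Rightarrow> bit poly \<Rightarrow> bit poly" where
  "gf_mult p q = (p * q) mod gf_mod"

definition cubes :: "bit poly set" where
  "cubes = {gf_mult x (gf_mult x x) | x. x \<in> GF16 \<and> x \<noteq> 0}"

definition G_adj :: "bit poly \<Rightarrow> bit poly \<Rightarrow> bool" where
  "G_adj x y \<longleftrightarrow> x \<in> GF16 \<and> y \<in> GF16 \<and> x \<noteq> y \<and> x - y \<in> cubes"

definition path_adj :: "nat \<Rightarrow> nat \<Rightarrow> bool" where
  "path_adj i j \<longleftrightarrow> i = j + 1 \<or> j = i + 1"

definition has_induced_path :: "'a set \<Rightarrow> ('a \<Rightarrow> 'a \<Rightarrow> bool) \<Rightarrow> nat \<Rightarrow> bool" where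
  "has_induced_path V E n \<longleftrightarrow>
     (\<exists>f. inj_on f {..<n} \<and> f ` {..<n} \<subseteq> V \<and>
          (\<forall>i<n. \<forall>j<n. E (f i) (f j) \<longleftrightarrow> path_adj i j))"

end

theory Submission
  imports Defs
begin

definition bt :: "nat \<Rightarrow> nat \<Rightarrow> bit" where "bt n i = (if odd (n div 2^i) then 1 else 0)"
definition v :: "nat \<Rightarrow> bit poly" where
 "v n = [:bt n 0, bt n 1, bt n 2, bt n 3:]"
definition L16 :: "bit poly list" where "L16 = map v [0..<16]"
definition C5 :: "bit poly list" where "C5 = map v [1,8,12,10,15]"
definition TT :: "(nat \<times> nat \<times> nat list) list" where "TT = [(0,1,[0,8,2,3,11,1]), (0,8,[0,1,11,3,2,8]), (0,10,[0,1,9,3,2,10]), (0,12,[0,1,9,3,12,4]), (0,15,[0,1,9,3,15,7]), (1,9,[0,1,11,3,9,5]), (1,11,[0,1,9,3,11,4]), (1,13,[0,1,9,3,2,13]), (1,14,[0,1,9,3,2,14]), (2,3,[2,8,0,1,11,3]), (2,8,[0,8,4,5,13,2]), (2,10,[0,10,5,4,14,2]), (2,13,[1,13,5,4,8,2]), (2,14,[1,14,4,5,10,2]), (3,9,[1,9,5,4,12,3]), (3,11,[1,11,4,5,15,3]), (3,12,[0,12,4,5,9,3]), (3,15,[0,15,5,4,11,3]), (4,5,[4,8,0,1,13,5]), (4,8,[0,8,2,3,11,4]), (4,11,[1,11,3,2,8,4]), (4,12,[0,12,3,2,14,4]), (4,14,[1,14,2,3,12,4]), (5,9,[1,9,3,2,10,5]),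 (5,10,[0,10,2,3,9,5]), (5,13,[1,13,2,3,15,5]), (5,15,[0,15,3,2,13,5]), (6,7,[6,9,1,0,15,7]), (6,9,[1,9,3,2,10,6]), (6,10,[0,10,2,3,9,6]), (6,12,[0,12,3,2,14,6]), (6,14,[1,14,2,3,12,6]), (7,8,[0,8,2,3,11,7]), (7,11,[1,11,3,2,8,7]), (7,13,[1,13,2,3,15,7]), (7,15,[0,15,3,2,13,7]), (8,9,[0,8,2,3,9,5]), (10,11,[0,10,2,3,11,4]), (12,13,[0,12,3,2,13,5]), (14,15,[0,15,3,2,14,4])]"

definition Ga :: "bit poly \<Rightarrow> bit poly \<Rightarrow> bool" where
  "Ga x y \<longleftrightarrow> x \<in> set L16 \<and> y \<in> set L16 \<and> x \<noteq> y \<and> x - y \<in> set C5"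
definition adjn :: "nat \<Rightarrow> nat \<Rightarrow> bool" where "adjn m n \<longleftrightarrow> m \<noteq> n \<and> (Bit_Operations.xor m n) \<in> {1,8,12,10,15}"

lemma cubes_calc: "set (map (\<lambda>x. gf_mult x (gf_mult x x)) (filter (\<lambda>x. x \<noteq> 0) L16)) = set C5"
  unfolding gf_mult_def gf_mod_def L16_def C5_def v_def bt_def by code_simp

lemma deg: "\<forall>x\<in>set L16. degree x < 4" unfolding L16_def v_def bt_def by code_simp

lemma allbits: "\<forall>a\<in>{0,1::bit}. \<forall>b\<in>{0,1::bit}. \<forall>c\<in>{0,1::bit}. \<forall>d\<in>{0,1::bit}. [:a,b,c,d:] \<in> set L16"
  unfolding L16_def v_def bt_def by code_simp

lemma bit01: "(a::bit) \<in> {0,1}" by (cases "a = 0") auto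

lemma deg4_eq: assumes "degree (p::bit poly) < 4"
  shows "p = [:coeff p 0, coeff p 1, coeff p 2, coeff p 3:]"
proof (rule poly_eqI)
  fix n show "coeff p n = coeff [:coeff p 0, coeff p 1, coeff p 2, coeff p 3:] n"
  proof (cases "n < 4")
    case True
    then have "n = 0 \<or> n = 1 \<or> n = 2 \<or> n = 3" by auto
    then show ?thesis by (auto simp: coeff_pCons numeral_eq_Suc)
  next
    case False
    then have "coeff p n = 0" using assms by (intro coeff_eq_0) auto
    moreover have "coeff [:coeff p 0, coeff p 1, coeff p 2, coeff p 3:] n = 0"
      using False by (simp add: coeff_pCons split: nat.split)
    ultimately show ?thesis by simp
  qed
qed

lemma GF16_eq: "GF16 = set L16"
proof
  show "GF16 \<subseteq> set L16"
  proof
    fix p assume "p \<in> GF16"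
    then have "degree p < 4" by (simp add: GF16_def)
    then have "p = [:coeff p 0, coeff p 1, coeff p 2, coeff p 3:]" by (rule deg4_eq)
    moreover have "[:coeff p 0, coeff p 1, coeff p 2, coeff p 3:] \<in> set L16"
      using allbits bit01 by blast
    ultimately show "p \<in> set L16" by simp
  qed
  show "set L16 \<subseteq> GF16" using deg by (auto simp: GF16_def)
qed

lemma cubes_eq: "cubes = set C5"
proof -
  have "cubes = (\<lambda>x. gf_mult x (gf_mult x x)) ` {x \<in> set L16. x \<noteq> 0}"
    unfolding cubes_def GF16_eq by auto
  also have "\<dots> = set C5" using cubes_calc by simp
  finally show ?thesis .
qed

lemma G_adj_eq: "G_adj x y = Ga x y"
  unfolding G_adj_def Ga_def GF16_eq cubes_eq by simp

lemma v_inj0: "\<forall>m\<in>set [0..<16]. \<forall>n\<in>set [0..<16]. (v m = v n) = (m = n)"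
  unfolding v_def bt_def by code_simp
lemma Ga_v0: "\<forall>m\<in>set [0..<16]. \<forall>n\<in>set [0..<16]. Ga (v m) (v n) = adjn m n"
  unfolding Ga_def adjn_def L16_def C5_def v_def bt_def by code_simp
lemma table_ok: "\<forall>(a,b,p)\<in>set TT. length p = 6 \<and> distinct p \<and> (\<forall>k\<in>set p. k < 16) \<and>
   (\<forall>i\<in>set [0..<6]. \<forall>j\<in>set [0..<6]. (adjn (p!i) (p!j) \<and> {p!i, p!j} \<noteq> {a, b}) = path_adj i j)"
  unfolding TT_def adjn_def path_adj_def by code_simp
lemma table_cover: "\<forall>m\<in>set [0..<16]. \<forall>n\<in>set [0..<16]. adjn m n \<longrightarrow> (\<exists>(a,b,p)\<in>set TT. {m,n} = {a,b})"
  unfolding TT_def adjn_def by code_simp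

lemma inj_v: "inj_on v {..<16}"
  using v_inj0 unfolding inj_on_def by auto

lemma Ga_v: "m < 16 \<Longrightarrow> n < 16 \<Longrightarrow> Ga (v m) (v n) = adjn m n"
  using Ga_v0 by auto

lemma pair_v: assumes "a < 16" "b < 16" "c < 16" "d < 16"
  shows "({v a, v b} = {v c, v d}) = ({a,b} = {c,d})"
proof -
  have "{v a, v b} = v ` {a,b}" "{v c, v d} = v ` {c,d}" by auto
  moreover have "{a,b} \<subseteq> {..<16}" "{c,d} \<subseteq> {..<16}" using assms by auto
  ultimately show ?thesis using inj_on_image_eq_iff[OF inj_v] by metis
qed

theorem claim3:
  shows "\<forall>x y. G_adj x y \<longrightarrow>
           has_induced_path GF16 (\<lambda>u v. G_adj u v \<and> {u, v} \<noteq> {x, y}) 6"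
proof (intro allI impI)
  fix x y assume "G_adj x y"
  then have g: "Ga x y" by (simp add: G_adj_eq)
  then have "x \<in> set L16" "y \<in> set L16" by (auto simp: Ga_def)
  then obtain m n where mn: "m < 16" "n < 16" "x = v m" "y = v n" by (auto simp: L16_def)
  with g have "adjn m n" using Ga_v by simp
  with table_cover mn obtain a b p where abp: "(a,b,p) \<in> set TT" and xy: "{m,n} = {a,b}" by fastforce
  have H: "length p = 6 \<and> distinct p \<and> (\<forall>k\<in>set p. k < 16) \<and>
     (\<forall>i\<in>set [0..<6]. \<forall>j\<in>set [0..<6]. (adjn (p!i) (p!j) \<and> {p!i, p!j} \<noteq> {a, b}) = path_adj i j)"
    using bspec[OF table_ok abp] by simp
  then have len: "length p = 6" and dis: "distinct p"
    and inL: "\<forall>k\<in>set p. k < 16"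
    and pa: "\<forall>i\<in>set [0..<6]. \<forall>j\<in>set [0..<6]. (adjn (p!i) (p!j) \<and> {p!i, p!j} \<noteq> {a, b}) = path_adj i j"
    by blast+
  have ab: "{m,n} = {a,b}" by (fact xy)
  define f where "f i = v (p ! i)" for i
  have pin: "p ! i < 16" if "i < 6" for i using inL len that by auto
  show "has_induced_path GF16 (\<lambda>u v. G_adj u v \<and> {u, v} \<noteq> {x, y}) 6"
    unfolding has_induced_path_def
  proof (intro exI conjI)
    show "inj_on f {..<6}"
    proof (rule inj_onI)
      fix i j assume "i \<in> {..<6}" "j \<in> {..<6}" "f i = f j"
      then have "p ! i = p ! j" using v_inj0 pin unfolding f_def by auto
      then show "i = j" using dis len \<open>i \<in> {..<6}\<close> \<open>j \<in> {..<6}\<close> by (simp add: nth_eq_iff_index_eq)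
    qed
    show "f ` {..<6} \<subseteq> GF16" using pin unfolding f_def GF16_eq L16_def by auto
    show "\<forall>i<6. \<forall>j<6. (G_adj (f i) (f j) \<and> {f i, f j} \<noteq> {x, y}) = path_adj i j"
    proof (intro allI impI)
      fix i j :: nat assume ij: "i < 6" "j < 6"
      have "G_adj (f i) (f j) = adjn (p!i) (p!j)" unfolding f_def G_adj_eq using Ga_v pin ij by simp
      moreover have "({f i, f j} = {x, y}) = ({p!i, p!j} = {a,b})"
        unfolding f_def mn(3,4) using pair_v pin ij mn ab by simp
      moreover have "(adjn (p!i) (p!j) \<and> {p!i, p!j} \<noteq> {a, b}) = path_adj i j" using pa ij by simp
      ultimately show "(G_adj (f i) (f j) \<and> {f i, f j} \<noteq> {x, y}) = path_adj i j" by simp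
    qed
  qed
qed

end
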